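(* Let $A\in\mathbf{R}^{n\times n}$, $C_i\in\mathbf{R}^{m_i\times n}$ ($i=1,\ldots,N$), $H\in\mathbf{R}^{p\times n}$, and let $\mathcal{L}$ be the Laplacian of a directed graph on $N$ nodes. Set $\bar A=I_N\otimes A$, $\bar C=\mathrm{diag}[C_1,\ldots,C_N]$, $\bar H=\mathcal{L}\otimes H$. Suppose the pair $\left(\begin{bmatrix}\bar C\\ \bar H\end{bmatrix},\bar A\right)$ is detectable. Then: (i) $\bigcap_{i=1}^N\mathcal{C}_i=\{0\}$; (ii) $\mathcal{O}_H\cap\mathcal{C}_i=\{0\}$ for all $i=1,\ldots,N$; (iii) $\operatorname{rank}O_H\ge\max_i\dim\mathcal{C}_i$. Here $\mathcal{C}_i$ is the undetectable subspace of $(C_i,A)$, $\mathcal{O}_H=\bigcap_{l=1}^n\operatorname{Ker}(HA^{l-1})$ is the unobservable subspace of $(H,A)$, and $O_H=[H';(HA)';\ldots;(HA^{n-1})']'$ is the observability matrix of $(H,A)$.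
   Context: Directed graph on $\{1,\ldots,N\}$ without self-loops; adjacency matrix $\mathbf{A}=[\mathbf{a}_{ij}]$ with $\mathbf{a}_{ij}=1$ if there is an edge from $j$ to $i$, else $0$; $p_i$ the in-degree of node $i$; Laplacian $\mathcal{L}=\mathrm{diag}[p_1,\ldots,p_N]-\mathbf{A}$. For a square matrix $F$ with minimal polynomial $\alpha_F=\alpha_F^-\alpha_F^+$ (zeros of $\alpha_F^-$ in the open left half-plane, of $\alpha_F^+$ in the closed right half-plane), the undetectable subspace of $(G,F)$ is $\bigcap_{l=1}^n\operatorname{Ker}(GF^{l-1})\cap\operatorname{Ker}\alpha_F^+(F)$; the pair is detectable iff this subspace is $\{0\}$. *)

theory Defs
  imports "Jordan_Normal_Form.Matrix_Kernel" "Jordan_Normal_Form.DL_Rank"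
    "HOL-Computational_Algebra.Polynomial"
begin

text \<open>Evaluation of a polynomial at a square matrix (Horner scheme):
  p(F) = c0 I + F (c1 I + F (c2 I + ...)).\<close>
definition poly_mat :: "real poly \<Rightarrow> real mat \<Rightarrow> real mat" where
  "poly_mat p F = foldr (\<lambda>c M. c \<cdot>\<^sub>m 1\<^sub>m (dim_row F) + F * M) (coeffs p) (0\<^sub>m (dim_row F) (dim_row F))"

text \<open>Minimal polynomial: the monic polynomial of least degree annihilating F.\<close>
definition min_poly :: "real mat \<Rightarrow> real poly" where
  "min_poly F = (THE p. lead_coeff p = 1 \<and> poly_mat p F = 0\<^sub>m (dim_row F) (dim_row F) \<and>
      (\<forall>q. q \<noteq> 0 \<and> poly_mat q F = 0\<^sub>m (dim_row F) (dim_row F) \<longrightarrow> degree p \<le> degree q))"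

text \<open>The factor alpha_F^+ in alpha_F = alpha_F^- alpha_F^+: zeros of alpha_F^- lie in the open left
  half-plane, zeros of alpha_F^+ in the closed right half-plane (both factors taken monic).\<close>
definition min_poly_plus :: "real mat \<Rightarrow> real poly" where
  "min_poly_plus F = (THE q. \<exists>r. min_poly F = r * q \<and> lead_coeff q = 1 \<and> lead_coeff r = 1 \<and>
      (\<forall>z. poly (map_poly complex_of_real q) z = 0 \<longrightarrow> Re z \<ge> 0) \<and>
      (\<forall>z. poly (map_poly complex_of_real r) z = 0 \<longrightarrow> Re z < 0))"

text \<open>Undetectable subspace of (G,F), F an n x n matrix.\<close>
definition undetectable_subspace :: "real mat \<Rightarrow> real mat \<Rightarrow> real vec set" where
  "undetectable_subspace G F =
     carrier_vec (dim_row F) \<inter> (\<Inter>l\<in>{1..dim_row F}. mat_kernel (G * F ^\<^sub>m (l - 1)))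
       \<inter> mat_kernel (poly_mat (min_poly_plus F) F)"

definition detectable :: "real mat \<Rightarrow> real mat \<Rightarrow> bool" where
  "detectable G F \<longleftrightarrow> undetectable_subspace G F = {0\<^sub>v (dim_row F)}"

text \<open>Unobservable subspace of (H,A).\<close>
definition unobservable_subspace :: "real mat \<Rightarrow> real mat \<Rightarrow> real vec set" where
  "unobservable_subspace H A =
     carrier_vec (dim_row A) \<inter> (\<Inter>l\<in>{1..dim_row A}. mat_kernel (H * A ^\<^sub>m (l - 1)))"

text \<open>Observability matrix [H; HA; ...; HA^(n-1)].\<close>
definition obs_matrix :: "real mat \<Rightarrow> real mat \<Rightarrow> real mat" where
  "obs_matrix H A = foldr (\<lambda>l M. (H * A ^\<^sub>m l) @\<^sub>r M) [0..<dim_row A] (0\<^sub>m 0 (dim_col H))"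

definition mat_rank :: "real mat \<Rightarrow> nat" where
  "mat_rank M = vec_space.rank (dim_row M) M"

text \<open>Dimension of a subspace W of R^n.\<close>
definition subspace_dim :: "nat \<Rightarrow> real vec set \<Rightarrow> nat" where
  "subspace_dim n W = vectorspace.dim class_ring ((module_vec TYPE(real) n)\<lparr>carrier := W\<rparr>)"

definition kron :: "real mat \<Rightarrow> real mat \<Rightarrow> real mat" where
  "kron X Y = mat (dim_row X * dim_row Y) (dim_col X * dim_col Y)
     (\<lambda>(i, j). X $$ (i div dim_row Y, j div dim_col Y) * Y $$ (i mod dim_row Y, j mod dim_col Y))"

text \<open>Directed graph on nodes 0..N-1 (0-based version of 1..N), E j i meaning an edge from j to i.
  Adjacency a_ij = 1 iff there is an edge from j to i; in-degree p_i; Laplacian diag(p) - A.\<close>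
definition adjacency :: "nat \<Rightarrow> (nat \<Rightarrow> nat \<Rightarrow> bool) \<Rightarrow> real mat" where
  "adjacency N E = mat N N (\<lambda>(i, j). if E j i then 1 else 0)"

definition in_degree :: "nat \<Rightarrow> (nat \<Rightarrow> nat \<Rightarrow> bool) \<Rightarrow> nat \<Rightarrow> nat" where
  "in_degree N E i = card {j. j < N \<and> E j i}"

definition laplacian :: "nat \<Rightarrow> (nat \<Rightarrow> nat \<Rightarrow> bool) \<Rightarrow> real mat" where
  "laplacian N E = mat_diag N (\<lambda>i. real (in_degree N E i)) - adjacency N E"

end

theory Submission
  imports Defs
begin



lemma (in vec_space) subspace_crit:
  assumes "X \<subseteq> carrier_vec n" "0\<^sub>v n \<in> X"
    "\<And>v w. v \<in> X \<Longrightarrow> w \<in> X \<Longrightarrow> v + w \<in> X"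
    "\<And>c v. v \<in> X \<Longrightarrow> c \<cdot>\<^sub>v v \<in> X"
  shows "subspace class_ring X V"
  unfolding subspace_def submodule_def using assms vectorspace_axioms module_axioms
  by (auto simp: class_ring_simps)

lemma mult_zero_vec_r[simp]: "A \<in> carrier_mat nr nc \<Longrightarrow> A *\<^sub>v 0\<^sub>v nc = (0\<^sub>v nr :: 'a::semiring_0 vec)"
  by (intro eq_vecI, auto simp: scalar_prod_def)

definition Kset :: "nat \<Rightarrow> real mat \<Rightarrow> real mat \<Rightarrow> nat \<Rightarrow> real vec set" where
  "Kset n B A j = {v \<in> carrier_vec n. \<forall>k<j. B *\<^sub>v (A ^\<^sub>m k *\<^sub>v v) = 0\<^sub>v (dim_row B)}"

lemma Kset_subspace:
  assumes A: "A \<in> carrier_mat n n" and B: "B \<in> carrier_mat q n"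
  shows "subspace class_ring (Kset n B A j) (module_vec TYPE(real) n)"
proof -
  interpret vec_space "TYPE(real)" n .
  have pw: "\<And>k. A ^\<^sub>m k \<in> carrier_mat n n" using A by auto
  show ?thesis
  proof (rule subspace_crit)
    show "Kset n B A j \<subseteq> carrier_vec n" unfolding Kset_def by auto
    show "0\<^sub>v n \<in> Kset n B A j" unfolding Kset_def using A B pw by (auto simp: mult_zero_vec_r[OF pw] mult_zero_vec_r[OF B])
    fix v w assume v: "v \<in> Kset n B A j" and w: "w \<in> Kset n B A j"
    have vc: "v \<in> carrier_vec n" and wc: "w \<in> carrier_vec n" using v w unfolding Kset_def by auto
    { fix k assume k: "k < j"
      have "B *\<^sub>v (A ^\<^sub>m k *\<^sub>v (v + w)) = B *\<^sub>v (A ^\<^sub>m k *\<^sub>v v) + B *\<^sub>v (A ^\<^sub>m k *\<^sub>v w)"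
        using mult_add_distrib_mat_vec[OF pw[of k] vc wc] mult_add_distrib_mat_vec[OF B, of "A ^\<^sub>m k *\<^sub>v v" "A ^\<^sub>m k *\<^sub>v w"]
          pw[of k] vc wc by auto
      also have "\<dots> = 0\<^sub>v q" using v w k B unfolding Kset_def by auto
      finally have "B *\<^sub>v (A ^\<^sub>m k *\<^sub>v (v + w)) = 0\<^sub>v q" . }
    then show "v + w \<in> Kset n B A j" using vc wc B unfolding Kset_def by auto
  next
    fix c v assume v: "v \<in> Kset n B A j"
    have vc: "v \<in> carrier_vec n" using v unfolding Kset_def by auto
    { fix k assume k: "k < j"
      have "B *\<^sub>v (A ^\<^sub>m k *\<^sub>v (c \<cdot>\<^sub>v v)) = c \<cdot>\<^sub>v (B *\<^sub>v (A ^\<^sub>m k *\<^sub>v v))"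
        using mult_mat_vec[OF pw[of k] vc] mult_mat_vec[OF B, of "A ^\<^sub>m k *\<^sub>v v"] pw[of k] vc by auto
      also have "\<dots> = 0\<^sub>v q" using v k B unfolding Kset_def by (auto intro!: eq_vecI)
      finally have "B *\<^sub>v (A ^\<^sub>m k *\<^sub>v (c \<cdot>\<^sub>v v)) = 0\<^sub>v q" . }
    then show "c \<cdot>\<^sub>v v \<in> Kset n B A j" using vc B unfolding Kset_def by auto
  qed
qed

lemma Kset_mono: "j \<le> j' \<Longrightarrow> Kset n B A j' \<subseteq> Kset n B A j"
  unfolding Kset_def by auto

lemma pow_shift:
  assumes A: "A \<in> carrier_mat n n" and v: "v \<in> carrier_vec n"
  shows "A ^\<^sub>m k *\<^sub>v (A *\<^sub>v v) = A ^\<^sub>m (Suc k) *\<^sub>v v"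
  using A v by (simp add: assoc_mult_mat_vec[of "A ^\<^sub>m k" n n A n v])

lemma Kset_step:
  assumes A: "A \<in> carrier_mat n n" and eq: "Kset n B A j = Kset n B A (Suc j)"
  shows "Kset n B A (Suc j) = Kset n B A (Suc (Suc j))"
proof
  show "Kset n B A (Suc (Suc j)) \<subseteq> Kset n B A (Suc j)" by (rule Kset_mono, simp)
  show "Kset n B A (Suc j) \<subseteq> Kset n B A (Suc (Suc j))"
  proof
    fix v assume v: "v \<in> Kset n B A (Suc j)"
    hence vc: "v \<in> carrier_vec n" unfolding Kset_def by auto
    have "A *\<^sub>v v \<in> Kset n B A j" using v vc A unfolding Kset_def
      by (auto simp: pow_shift[OF A vc])
    hence "A *\<^sub>v v \<in> Kset n B A (Suc j)" using eq by simp
    hence "B *\<^sub>v (A ^\<^sub>m j *\<^sub>v (A *\<^sub>v v)) = 0\<^sub>v (dim_row B)" unfolding Kset_def by auto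
    hence "B *\<^sub>v (A ^\<^sub>m (Suc j) *\<^sub>v v) = 0\<^sub>v (dim_row B)" by (simp add: pow_shift[OF A vc])
    with v show "v \<in> Kset n B A (Suc (Suc j))" unfolding Kset_def using less_Suc_eq by auto
  qed
qed

lemma Kset_const:
  assumes A: "A \<in> carrier_mat n n" and eq: "Kset n B A j = Kset n B A (Suc j)"
  shows "Kset n B A (j + t) = Kset n B A j \<and> Kset n B A (j + t) = Kset n B A (Suc (j + t))"
proof (induction t)
  case (Suc t)
  then show ?case using Kset_step[OF A, of B "j + t"] by (metis add_Suc_right)
qed (use eq in simp)

lemma Kset_exists_eq:
  assumes A: "A \<in> carrier_mat n n" and B: "B \<in> carrier_mat q n"
  shows "\<exists>j\<le>n. Kset n B A j = Kset n B A (Suc j)"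
proof (rule ccontr)
  interpret vec_space "TYPE(real)" n .
  assume "\<not> ?thesis"
  hence ne: "\<forall>j\<le>n. Kset n B A (Suc j) \<subset> Kset n B A j"
  proof (intro allI impI)
    fix j assume nj: "\<not> (\<exists>j\<le>n. Kset n B A j = Kset n B A (Suc j))" and j: "j \<le> n"
    have "Kset n B A (Suc j) \<subseteq> Kset n B A j" by (rule Kset_mono) simp
    moreover have "Kset n B A (Suc j) \<noteq> Kset n B A j" using nj j by metis
    ultimately show "Kset n B A (Suc j) \<subset> Kset n B A j" by blast
  qed
  hence "\<forall>j\<le>n. \<exists>v. v \<in> Kset n B A j \<and> v \<notin> Kset n B A (Suc j)" by blast
  then obtain v where v: "\<And>j. j \<le> n \<Longrightarrow> v j \<in> Kset n B A j \<and> v j \<notin> Kset n B A (Suc j)" by metis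
  have sub: "\<And>j. submodule class_ring (Kset n B A j) V" using Kset_subspace[OF A B] by (simp add: is_module)
  have P: "lin_indpt (v ` {s..n}) \<and> v ` {s..n} \<subseteq> Kset n B A s \<and> card (v ` {s..n}) = Suc n - s"
    if "s \<le> Suc n" for s
    using that
  proof (induction s rule: inc_induct)
    case base
    then show ?case by (simp add: lin_dep_def)
  next
    case (step s)
    have sn: "s \<le> n" using step by simp
    have eqset: "v ` {s..n} = v ` {Suc s..n} \<union> {v s}" 
    proof -
      have "{s..n} = insert s {Suc s..n}" using sn by auto
      then show ?thesis by auto
    qed
    have KC: "Kset n B A (Suc s) \<subseteq> carrier_vec n" unfolding Kset_def by auto
    have S1: "v ` {Suc s..n} \<subseteq> Kset n B A (Suc s)" using step.IH by simp
    have spn: "span (v ` {Suc s..n}) \<subseteq> Kset n B A (Suc s)"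
      by (rule span_is_subset[OF S1 sub])
    have vs: "v s \<notin> Kset n B A (Suc s)" "v s \<in> Kset n B A s" using v[OF sn] by auto
    have vsC: "v s \<in> carrier_vec n" using vs unfolding Kset_def by auto
    have notin: "v s \<notin> v ` {Suc s..n}" using vs S1 by blast
    have notspan: "v s \<notin> span (v ` {Suc s..n})" using vs spn by blast
    have li: "lin_indpt (v ` {Suc s..n} \<union> {v s})"
    proof -
      have "v ` {Suc s..n} \<subseteq> carrier_vec n" using S1 KC by blast
      then show ?thesis
        using lin_dep_iff_in_span[of "v ` {Suc s..n}" "v s"] step.IH vsC notin notspan by auto
    qed
    have "v ` {s..n} \<subseteq> Kset n B A s" using S1 vs Kset_mono[of s "Suc s" n B A] eqset by auto
    moreover have "card (v ` {s..n}) = Suc n - s" using eqset notin step.IH sn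
      by (simp add: card_insert_if)
    ultimately show ?case using li eqset by simp
  qed
  from P[of 0] have li: "lin_indpt (v ` {0..n})" and sub0: "v ` {0..n} \<subseteq> carrier_vec n"
    and cd: "card (v ` {0..n}) = Suc n" unfolding Kset_def by auto
  have "card (v ` {0..n}) \<le> dim" using li_le_dim(2)[OF fin_dim _ li] sub0 by simp
  then show False using cd dim_is_n by simp
qed

lemma stab:
  fixes A B :: "real mat"
  assumes A: "A \<in> carrier_mat n n" and B: "B \<in> carrier_mat q n" and x: "x \<in> carrier_vec n"
    and h: "\<forall>k<n. B *\<^sub>v (A ^\<^sub>m k *\<^sub>v x) = 0\<^sub>v q"
  shows "B *\<^sub>v (A ^\<^sub>m k *\<^sub>v x) = 0\<^sub>v q"
proof -
  obtain j where j: "j \<le> n" "Kset n B A j = Kset n B A (Suc j)" using Kset_exists_eq[OF A B] by blast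
  have xn: "x \<in> Kset n B A n" using x h B unfolding Kset_def by auto
  have "Kset n B A n = Kset n B A j" using Kset_const[OF A j(2), of "n - j"] j(1) by simp
  moreover have "Kset n B A (j + (n + Suc k - j)) = Kset n B A j" using Kset_const[OF A j(2)] by blast
  ultimately have "x \<in> Kset n B A (j + (n + Suc k - j))" using xn by simp
  moreover have "k < j + (n + Suc k - j)" using j(1) by simp
  ultimately show ?thesis using B unfolding Kset_def by auto
qed



lemma sum_div_mod:
  fixes g :: "nat \<Rightarrow> nat \<Rightarrow> 'a::comm_monoid_add"
  shows "(\<Sum>c<N*n. g (c div n) (c mod n)) = (\<Sum>i<N. \<Sum>r<n. g i r)"
proof (induction N)
  case (Suc N)
  have "(\<Sum>c<Suc N*n. g (c div n) (c mod n)) = (\<Sum>c<N*n. g (c div n) (c mod n)) + (\<Sum>c\<in>{N*n..<N*n+n}. g (c div n) (c mod n))"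
    by (simp add: add.commute sum.atLeastLessThan_concat[symmetric] lessThan_atLeast0 sum.atLeastLessThan_concat)
  also have "(\<Sum>c\<in>{N*n..<N*n+n}. g (c div n) (c mod n)) = (\<Sum>r<n. g N r)"
  proof -
    have "(\<Sum>c\<in>{N*n..<N*n+n}. g (c div n) (c mod n)) = (\<Sum>r\<in>{0..<n}. g ((N*n + r) div n) ((N*n+r) mod n))"
      by (rule sum.reindex_bij_witness[of _ "\<lambda>r. N*n + r" "\<lambda>c. c - N*n"]) auto
    also have "\<dots> = (\<Sum>r<n. g N r)" by (rule sum.cong) (auto simp: lessThan_atLeast0)
    finally show ?thesis .
  qed
  finally show ?case using Suc by simp
qed simp

definition stk :: "nat \<Rightarrow> nat \<Rightarrow> (nat \<Rightarrow> real vec) \<Rightarrow> real vec" where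
  "stk N n f = vec (N*n) (\<lambda>c. f (c div n) $ (c mod n))"

lemma stk_carrier[simp]: "stk N n f \<in> carrier_vec (N*n)" unfolding stk_def by auto

lemma stk_dim[simp]: "dim_vec (stk N n f) = N*n" unfolding stk_def by auto

lemma stk_index: "c < N*n \<Longrightarrow> stk N n f $ c = f (c div n) $ (c mod n)" unfolding stk_def by auto

lemma kron_mult_stk:
  assumes X: "X \<in> carrier_mat M N" and Y: "Y \<in> carrier_mat p n" and k: "k < M*p"
    and f: "\<And>j. j < N \<Longrightarrow> f j \<in> carrier_vec n"
  shows "(kron X Y *\<^sub>v stk N n f) $ k = (\<Sum>j<N. X $$ (k div p, j) * (Y *\<^sub>v f j) $ (k mod p))"
proof -
  have p: "p > 0" using k by (cases p) auto
  have kd: "k div p < M" using k by (simp add: less_mult_imp_div_less)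
  have km: "k mod p < p" using p by simp
  have dims: "dim_row (kron X Y) = M*p" "dim_col (kron X Y) = N*n" using X Y unfolding kron_def by auto
  have "(kron X Y *\<^sub>v stk N n f) $ k = (\<Sum>c<N*n. kron X Y $$ (k, c) * stk N n f $ c)"
    using k dims by (auto simp: scalar_prod_def lessThan_atLeast0 intro!: sum.cong)
  also have "\<dots> = (\<Sum>c<N*n. (\<lambda>j r. X $$ (k div p, j) * (Y $$ (k mod p, r) * f j $ r)) (c div n) (c mod n))"
  proof (rule sum.cong[OF refl])
    fix c assume c: "c \<in> {..<N*n}"
    show "kron X Y $$ (k, c) * stk N n f $ c = (\<lambda>j r. X $$ (k div p, j) * (Y $$ (k mod p, r) * f j $ r)) (c div n) (c mod n)"
      using c k X Y by (simp add: kron_def stk_index)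
  qed
  also have "\<dots> = (\<Sum>j<N. \<Sum>r<n. X $$ (k div p, j) * (Y $$ (k mod p, r) * f j $ r))"
    by (rule sum_div_mod)
  also have "\<dots> = (\<Sum>j<N. X $$ (k div p, j) * (Y *\<^sub>v f j) $ (k mod p))"
  proof (rule sum.cong[OF refl])
    fix j assume j: "j \<in> {..<N}"
    have "(Y *\<^sub>v f j) $ (k mod p) = (\<Sum>r<n. Y $$ (k mod p, r) * f j $ r)"
      using Y km f[of j] j by (simp add: scalar_prod_def lessThan_atLeast0)
    then show "(\<Sum>r<n. X $$ (k div p, j) * (Y $$ (k mod p, r) * f j $ r)) = X $$ (k div p, j) * (Y *\<^sub>v f j) $ (k mod p)"
      by (simp add: sum_distrib_left)
  qed
  finally show ?thesis .
qed

lemma kron_carrier: "X \<in> carrier_mat a b \<Longrightarrow> Y \<in> carrier_mat c d \<Longrightarrow> kron X Y \<in> carrier_mat (a*c) (b*d)"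
  unfolding kron_def by auto

lemma kron_id_stk:
  assumes X: "X \<in> carrier_mat n n" and f: "\<And>j. j < N \<Longrightarrow> f j \<in> carrier_vec n"
  shows "kron (1\<^sub>m N) X *\<^sub>v stk N n f = stk N n (\<lambda>i. X *\<^sub>v f i)"
proof (rule eq_vecI)
  have car: "kron (1\<^sub>m N) X \<in> carrier_mat (N*n) (N*n)" using kron_carrier[OF one_carrier_mat X] .
  show "dim_vec (kron (1\<^sub>m N) X *\<^sub>v stk N n f) = dim_vec (stk N n (\<lambda>i. X *\<^sub>v f i))" using car by simp
  fix k assume "k < dim_vec (stk N n (\<lambda>i. X *\<^sub>v f i))"
  hence k: "k < N*n" by simp
  have kd: "k div n < N" using k by (simp add: less_mult_imp_div_less)
  have "(kron (1\<^sub>m N) X *\<^sub>v stk N n f) $ k = (\<Sum>j<N. 1\<^sub>m N $$ (k div n, j) * (X *\<^sub>v f j) $ (k mod n))"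
    by (rule kron_mult_stk[OF one_carrier_mat X k f])
  also have "\<dots> = (\<Sum>j<N. if j = k div n then (X *\<^sub>v f j) $ (k mod n) else 0)"
    by (rule sum.cong, auto simp: kd)
  also have "\<dots> = (X *\<^sub>v f (k div n)) $ (k mod n)" using kd by simp
  finally show "(kron (1\<^sub>m N) X *\<^sub>v stk N n f) $ k = stk N n (\<lambda>i. X *\<^sub>v f i) $ k"
    using k by (simp add: stk_index)
qed

lemma laplacian_carrier: "laplacian N E \<in> carrier_mat N N"
  unfolding laplacian_def adjacency_def by auto

lemma laplacian_row_sum:
  assumes i: "i < N"
  shows "(\<Sum>j<N. laplacian N E $$ (i, j)) = 0"
proof -
  have "(\<Sum>j<N. laplacian N E $$ (i, j)) = (\<Sum>j<N. (if i = j then real (in_degree N E j) else 0) - (if E j i then 1 else 0))"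
    using i by (intro sum.cong) (auto simp: laplacian_def adjacency_def mat_diag_def)
  also have "\<dots> = real (in_degree N E i) - (\<Sum>j<N. (if E j i then 1 else 0))"
    using i by (simp add: sum_subtractf)
  also have "(\<Sum>j<N. (if E j i then 1 else 0)) = real (card {j. j < N \<and> E j i})"
    by (simp add: sum.If_cases lessThan_def Collect_conj_eq Int_commute)
  finally show ?thesis by (simp add: in_degree_def)
qed

lemma kron_lap_zero:
  assumes H: "H \<in> carrier_mat p n" and f: "\<And>j. j < N \<Longrightarrow> f j \<in> carrier_vec n"
    and h: "(\<forall>j<N. H *\<^sub>v f j = 0\<^sub>v p) \<or> (\<exists>y. \<forall>j<N. f j = y)"
  shows "kron (laplacian N E) H *\<^sub>v stk N n f = 0\<^sub>v (N*p)"
proof (rule eq_vecI)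
  have car: "kron (laplacian N E) H \<in> carrier_mat (N*p) (N*n)" using kron_carrier[OF laplacian_carrier H] .
  show "dim_vec (kron (laplacian N E) H *\<^sub>v stk N n f) = dim_vec (0\<^sub>v (N*p))" using car by simp
  fix k assume "k < dim_vec (0\<^sub>v (N*p))"
  hence k: "k < N*p" by simp
  have kd: "k div p < N" using k by (simp add: less_mult_imp_div_less)
  have p: "p > 0" using k by (cases p) auto
  have "(kron (laplacian N E) H *\<^sub>v stk N n f) $ k = (\<Sum>j<N. laplacian N E $$ (k div p, j) * (H *\<^sub>v f j) $ (k mod p))"
    by (rule kron_mult_stk[OF laplacian_carrier H k f])
  also have "\<dots> = 0"
    using h
  proof
    assume "\<forall>j<N. H *\<^sub>v f j = 0\<^sub>v p"
    then show ?thesis using p by (intro sum.neutral) auto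
  next
    assume "\<exists>y. \<forall>j<N. f j = y"
    then obtain y where y: "\<forall>j<N. f j = y" by blast
    have "(\<Sum>j<N. laplacian N E $$ (k div p, j) * (H *\<^sub>v f j) $ (k mod p))
        = (\<Sum>j<N. laplacian N E $$ (k div p, j)) * (H *\<^sub>v y) $ (k mod p)"
      using y by (simp add: sum_distrib_right)
    then show ?thesis using laplacian_row_sum[OF kd] by simp
  qed
  finally show "(kron (laplacian N E) H *\<^sub>v stk N n f) $ k = 0\<^sub>v (N*p) $ k" using k by simp
qed

lemma stk_cong:
  assumes "\<And>j. j < N \<Longrightarrow> f j = g j"
  shows "stk N n f = stk N n g"
proof -
  have "\<And>c. c < N*n \<Longrightarrow> c div n < N" by (simp add: less_mult_imp_div_less)
  then show ?thesis using assms unfolding stk_def by (auto intro!: eq_vecI)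
qed

lemma kron_pow_stk:
  assumes X: "X \<in> carrier_mat n n" and f: "\<And>j. j < N \<Longrightarrow> f j \<in> carrier_vec n"
  shows "kron (1\<^sub>m N) X ^\<^sub>m k *\<^sub>v stk N n f = stk N n (\<lambda>i. X ^\<^sub>m k *\<^sub>v f i)"
  using f
proof (induction k arbitrary: f)
  case 0
  have "kron (1\<^sub>m N) X \<in> carrier_mat (N*n) (N*n)" using kron_carrier[OF one_carrier_mat X] .
  then have "dim_row (kron (1\<^sub>m N) X) = N*n" by simp
  moreover have "stk N n (\<lambda>i. 1\<^sub>m (dim_row X) *\<^sub>v f i) = stk N n f"
    using X 0 by (intro stk_cong) auto
  ultimately show ?case by simp
next
  case (Suc k)
  have car: "kron (1\<^sub>m N) X \<in> carrier_mat (N*n) (N*n)" using kron_carrier[OF one_carrier_mat X] .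
  have "kron (1\<^sub>m N) X ^\<^sub>m Suc k *\<^sub>v stk N n f = kron (1\<^sub>m N) X ^\<^sub>m k *\<^sub>v (kron (1\<^sub>m N) X *\<^sub>v stk N n f)"
    using car by (simp add: assoc_mult_mat_vec[of _ "N*n" "N*n" _ "N*n"])
  also have "\<dots> = kron (1\<^sub>m N) X ^\<^sub>m k *\<^sub>v stk N n (\<lambda>i. X *\<^sub>v f i)" by (simp add: kron_id_stk[OF X Suc.prems])
  also have "\<dots> = stk N n (\<lambda>i. X ^\<^sub>m k *\<^sub>v (X *\<^sub>v f i))"
    by (rule Suc.IH) (use X Suc.prems in auto)
  also have "\<dots> = stk N n (\<lambda>i. X ^\<^sub>m Suc k *\<^sub>v f i)"
    using X Suc.prems by (intro stk_cong) (auto simp: assoc_mult_mat_vec[of _ n n _ n])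
  finally show ?case .
qed

lemma smult_one_mult_vec:
  assumes v: "v \<in> carrier_vec n"
  shows "(c \<cdot>\<^sub>m 1\<^sub>m n) *\<^sub>v v = c \<cdot>\<^sub>v (v :: real vec)"
proof (rule eq_vecI)
  fix i assume "i < dim_vec (c \<cdot>\<^sub>v v)"
  hence i: "i < n" using v by simp
  have "(c \<cdot>\<^sub>m 1\<^sub>m n) *\<^sub>v v = c \<cdot>\<^sub>v (1\<^sub>m n *\<^sub>v v)"
  proof (intro eq_vecI)
    fix j assume "j < dim_vec (c \<cdot>\<^sub>v (1\<^sub>m n *\<^sub>v v))"
    hence j: "j < n" by simp
    have "(\<Sum>ia = 0..<n. c * (if ia = j then 1 else 0) * v $ ia) = (\<Sum>ia = 0..<n. if ia = j then c * v $ ia else 0)"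
      by (rule sum.cong) auto
    also have "\<dots> = c * v $ j" using j by simp
    finally show "((c \<cdot>\<^sub>m 1\<^sub>m n) *\<^sub>v v) $ j = (c \<cdot>\<^sub>v (1\<^sub>m n *\<^sub>v v)) $ j"
      using j v by (simp add: scalar_prod_def)
  qed simp
  then show "((c \<cdot>\<^sub>m 1\<^sub>m n) *\<^sub>v v) $ i = (c \<cdot>\<^sub>v v) $ i" using v by simp
qed (use v in simp)

definition pf :: "real list \<Rightarrow> real mat \<Rightarrow> real mat" where
  "pf cs F = foldr (\<lambda>c M. c \<cdot>\<^sub>m 1\<^sub>m (dim_row F) + F * M) cs (0\<^sub>m (dim_row F) (dim_row F))"

lemma poly_mat_pf: "poly_mat p F = pf (coeffs p) F" unfolding poly_mat_def pf_def ..

lemma pf_Cons: "pf (c # cs) F = c \<cdot>\<^sub>m 1\<^sub>m (dim_row F) + F * pf cs F" unfolding pf_def by simp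

lemma pf_carrier: "F \<in> carrier_mat d d \<Longrightarrow> pf cs F \<in> carrier_mat d d"
  by (induction cs) (auto simp: pf_def)

lemma stk_lin:
  assumes "\<And>j. j < N \<Longrightarrow> f j \<in> carrier_vec n" "\<And>j. j < N \<Longrightarrow> g j \<in> carrier_vec n"
  shows "stk N n (\<lambda>i. c \<cdot>\<^sub>v f i + g i) = c \<cdot>\<^sub>v stk N n f + stk N n g"
proof (intro eq_vecI)
  fix i assume "i < dim_vec (c \<cdot>\<^sub>v stk N n f + stk N n g)"
  hence i: "i < N*n" by simp
  hence "i div n < N" "i mod n < n" by (auto simp: less_mult_imp_div_less) (cases n, auto)
  then show "stk N n (\<lambda>i. c \<cdot>\<^sub>v f i + g i) $ i = (c \<cdot>\<^sub>v stk N n f + stk N n g) $ i"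
  proof -
    have "f (i div n) \<in> carrier_vec n" "g (i div n) \<in> carrier_vec n" using assms \<open>i div n < N\<close> by auto
    then show ?thesis using \<open>i mod n < n\<close> i by (simp add: stk_index)
  qed
qed simp

lemma zero_mult_vec_l: "v \<in> carrier_vec nc \<Longrightarrow> 0\<^sub>m nr nc *\<^sub>v v = (0\<^sub>v nr :: 'a::semiring_0 vec)"
  by (intro eq_vecI, auto simp: scalar_prod_def)

lemma pf_stk:
  assumes X: "X \<in> carrier_mat n n" and f: "\<And>j. j < N \<Longrightarrow> f j \<in> carrier_vec n"
  shows "pf cs (kron (1\<^sub>m N) X) *\<^sub>v stk N n f = stk N n (\<lambda>i. pf cs X *\<^sub>v f i)"
proof (induction cs)
  case Nil
  have car: "kron (1\<^sub>m N) X \<in> carrier_mat (N*n) (N*n)" using kron_carrier[OF one_carrier_mat X] .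
  have "stk N n (\<lambda>i. pf [] X *\<^sub>v f i) = 0\<^sub>v (N*n)"
  proof (intro eq_vecI)
    fix i assume "i < dim_vec (0\<^sub>v (N*n))"
    hence i: "i < N*n" by simp
    hence "i div n < N" "i mod n < n" by (auto simp: less_mult_imp_div_less) (cases n, auto)
    then show "stk N n (\<lambda>i. pf [] X *\<^sub>v f i) $ i = 0\<^sub>v (N*n) $ i"
      using X f i by (simp add: pf_def stk_index zero_mult_vec_l)
  qed simp
  then show ?case using car by (simp add: pf_def zero_mult_vec_l[OF stk_carrier])
next
  case (Cons c cs)
  let ?K = "kron (1\<^sub>m N) X"
  have car: "?K \<in> carrier_mat (N*n) (N*n)" using kron_carrier[OF one_carrier_mat X] .
  have pK: "pf cs ?K \<in> carrier_mat (N*n) (N*n)" by (rule pf_carrier[OF car])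
  have pX: "pf cs X \<in> carrier_mat n n" by (rule pf_carrier[OF X])
  have "pf (c # cs) ?K *\<^sub>v stk N n f = (c \<cdot>\<^sub>m 1\<^sub>m (N*n)) *\<^sub>v stk N n f + ?K *\<^sub>v (pf cs ?K *\<^sub>v stk N n f)"
    unfolding pf_Cons using car pK
    by (simp add: add_mult_distrib_mat_vec[of _ "N*n" "N*n"] assoc_mult_mat_vec[of _ "N*n" "N*n" _ "N*n"])
  also have "\<dots> = c \<cdot>\<^sub>v stk N n f + ?K *\<^sub>v stk N n (\<lambda>i. pf cs X *\<^sub>v f i)"
    by (simp add: smult_one_mult_vec Cons.IH)
  also have "?K *\<^sub>v stk N n (\<lambda>i. pf cs X *\<^sub>v f i) = stk N n (\<lambda>i. X *\<^sub>v (pf cs X *\<^sub>v f i))"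
    by (rule kron_id_stk[OF X]) (use pX f in auto)
  also have "c \<cdot>\<^sub>v stk N n f + stk N n (\<lambda>i. X *\<^sub>v (pf cs X *\<^sub>v f i)) = stk N n (\<lambda>i. c \<cdot>\<^sub>v f i + X *\<^sub>v (pf cs X *\<^sub>v f i))"
    by (rule stk_lin[symmetric]) (use f X pX in auto)
  also have "\<dots> = stk N n (\<lambda>i. pf (c # cs) X *\<^sub>v f i)"
  proof (rule stk_cong)
    fix j assume j: "j < N"
    show "c \<cdot>\<^sub>v f j + X *\<^sub>v (pf cs X *\<^sub>v f j) = pf (c # cs) X *\<^sub>v f j"
      unfolding pf_Cons using X pX f[OF j]
      by (simp add: add_mult_distrib_mat_vec[of _ n n] assoc_mult_mat_vec[of _ n n _ n] smult_one_mult_vec)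
  qed
  finally show ?case .
qed

lemma mat_zero_iff:
  assumes M: "M \<in> carrier_mat d d"
  shows "M = 0\<^sub>m d d \<longleftrightarrow> (\<forall>v\<in>carrier_vec d. M *\<^sub>v v = (0\<^sub>v d :: real vec))"
proof
  assume "M = 0\<^sub>m d d" then show "\<forall>v\<in>carrier_vec d. M *\<^sub>v v = 0\<^sub>v d" by (simp add: zero_mult_vec_l)
next
  assume h: "\<forall>v\<in>carrier_vec d. M *\<^sub>v v = 0\<^sub>v d"
  show "M = 0\<^sub>m d d"
  proof (rule eq_matI)
    fix i j assume i: "i < dim_row (0\<^sub>m d d :: real mat)" and j: "j < dim_col (0\<^sub>m d d :: real mat)"
    have "M $$ (i, j) = (M *\<^sub>v unit_vec d j) $ i" using M i j by simp
    also have "\<dots> = 0" using h i by simp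
    finally show "M $$ (i, j) = 0\<^sub>m d d $$ (i, j)" using i j by simp
  qed (use M in auto)
qed

lemma stk_blk:
  assumes v: "v \<in> carrier_vec (N*n)"
  shows "stk N n (\<lambda>i. vec n (\<lambda>r. v $ (i*n + r))) = v"
proof (rule eq_vecI)
  fix c assume "c < dim_vec v"
  hence c: "c < N*n" using v by simp
  hence "c mod n < n" by (cases n) auto
  moreover have "(c div n) * n + c mod n = c" by simp
  ultimately show "stk N n (\<lambda>i. vec n (\<lambda>r. v $ (i*n + r))) $ c = v $ c" using c by (simp add: stk_index)
qed (use v in simp)

lemma poly_zero_equiv:
  assumes N: "N \<ge> 1" and A: "A \<in> carrier_mat n n"
  shows "(pf cs (kron (1\<^sub>m N) A) = 0\<^sub>m (N*n) (N*n)) \<longleftrightarrow> (pf cs A = 0\<^sub>m n n)"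
proof
  have car: "kron (1\<^sub>m N) A \<in> carrier_mat (N*n) (N*n)" using kron_carrier[OF one_carrier_mat A] .
  assume z: "pf cs (kron (1\<^sub>m N) A) = 0\<^sub>m (N*n) (N*n)"
  show "pf cs A = 0\<^sub>m n n"
    unfolding mat_zero_iff[OF pf_carrier[OF A]]
  proof
    fix v :: "real vec" assume v: "v \<in> carrier_vec n"
    have "stk N n (\<lambda>i. pf cs A *\<^sub>v v) = pf cs (kron (1\<^sub>m N) A) *\<^sub>v stk N n (\<lambda>i. v)"
      by (rule pf_stk[OF A, symmetric]) (use v in auto)
    also have "\<dots> = 0\<^sub>v (N*n)" using z by (simp add: zero_mult_vec_l[OF stk_carrier])
    finally have st: "stk N n (\<lambda>i. pf cs A *\<^sub>v v) = 0\<^sub>v (N*n)" .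
    show "pf cs A *\<^sub>v v = 0\<^sub>v n"
    proof (rule eq_vecI)
      fix r assume "r < dim_vec (0\<^sub>v n :: real vec)"
      hence r: "r < n" by simp
      have "r < N*n" using r N by (metis less_le_trans mult_1 mult_le_mono1)
      hence "stk N n (\<lambda>i. pf cs A *\<^sub>v v) $ r = 0" using st by simp
      then show "(pf cs A *\<^sub>v v) $ r = 0\<^sub>v n $ r" using r \<open>r < N*n\<close> by (simp add: stk_index)
    qed (use pf_carrier[OF A, of cs] in simp)
  qed
next
  assume z: "pf cs A = 0\<^sub>m n n"
  have car: "kron (1\<^sub>m N) A \<in> carrier_mat (N*n) (N*n)" using kron_carrier[OF one_carrier_mat A] .
  show "pf cs (kron (1\<^sub>m N) A) = 0\<^sub>m (N*n) (N*n)"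
    unfolding mat_zero_iff[OF pf_carrier[OF car]]
  proof
    fix v :: "real vec" assume v: "v \<in> carrier_vec (N*n)"
    let ?f = "\<lambda>i. vec n (\<lambda>r. v $ (i*n + r))"
    have "pf cs (kron (1\<^sub>m N) A) *\<^sub>v v = pf cs (kron (1\<^sub>m N) A) *\<^sub>v stk N n ?f" using stk_blk[OF v] by simp
    also have "\<dots> = stk N n (\<lambda>i. pf cs A *\<^sub>v ?f i)" by (rule pf_stk[OF A]) auto
    also have "\<dots> = stk N n (\<lambda>i. 0\<^sub>v n)" using z by (intro stk_cong) (simp add: zero_mult_vec_l)
    also have "\<dots> = 0\<^sub>v (N*n)" by (intro eq_vecI) (auto simp: stk_index, cases n, auto)
    finally show "pf cs (kron (1\<^sub>m N) A) *\<^sub>v v = 0\<^sub>v (N*n)" .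
  qed
qed

lemma min_poly_kron:
  assumes N: "N \<ge> 1" and A: "A \<in> carrier_mat n n"
  shows "min_poly (kron (1\<^sub>m N) A) = min_poly A"
proof -
  have car: "kron (1\<^sub>m N) A \<in> carrier_mat (N*n) (N*n)" using kron_carrier[OF one_carrier_mat A] .
  have eq: "\<And>p. (poly_mat p (kron (1\<^sub>m N) A) = 0\<^sub>m (dim_row (kron (1\<^sub>m N) A)) (dim_row (kron (1\<^sub>m N) A)))
     = (poly_mat p A = 0\<^sub>m (dim_row A) (dim_row A))"
    using car A poly_zero_equiv[OF N A] by (simp add: poly_mat_pf)
  show ?thesis unfolding min_poly_def eq ..
qed

lemma min_poly_plus_kron:
  assumes N: "N \<ge> 1" and A: "A \<in> carrier_mat n n"
  shows "min_poly_plus (kron (1\<^sub>m N) A) = min_poly_plus A"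
  unfolding min_poly_plus_def min_poly_kron[OF N A] ..



lemma stk_Cons: "stk (Suc L) n f = f 0 @\<^sub>v stk L n (\<lambda>i. f (Suc i))" if "f 0 \<in> carrier_vec n"
proof (rule eq_vecI)
  fix c assume "c < dim_vec (f 0 @\<^sub>v stk L n (\<lambda>i. f (Suc i)))"
  hence c: "c < n + L*n" using that by simp
  show "stk (Suc L) n f $ c = (f 0 @\<^sub>v stk L n (\<lambda>i. f (Suc i))) $ c"
  proof (cases "c < n")
    case True then show ?thesis using c that by (simp add: stk_index)
  next
    case False
    have np: "0 < n" using False c by (cases n) auto
    have "c div n = Suc ((c - n) div n)" using np False by (subst le_div_geq) auto
    moreover have "c mod n = (c - n) mod n" using np False by (subst le_mod_geq) auto
    ultimately show ?thesis using c that False by (simp add: stk_index)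
  qed
qed (use that in simp)

lemma diag_block_dims:
  assumes "\<forall>C\<in>set Cs. dim_col C = n"
  shows "diag_block_mat Cs \<in> carrier_mat (sum_list (map dim_row Cs)) (length Cs * n)"
proof -
  have "sum_list (map dim_col Cs) = length Cs * n" using assms by (induction Cs) auto
  then show ?thesis unfolding carrier_mat_def using dim_diag_block_mat[of Cs] by simp
qed

lemma diag_block_stk_zero:
  assumes "\<forall>C\<in>set Cs. dim_col C = n"
    and "\<And>i. i < length Cs \<Longrightarrow> f i \<in> carrier_vec n"
    and "\<And>i. i < length Cs \<Longrightarrow> Cs ! i *\<^sub>v f i = 0\<^sub>v (dim_row (Cs ! i))"
  shows "diag_block_mat Cs *\<^sub>v stk (length Cs) n f = 0\<^sub>v (sum_list (map dim_row Cs))"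
  using assms
proof (induction Cs arbitrary: f)
  case Nil
  show ?case by (intro eq_vecI) simp_all
next
  case (Cons C Cs)
  let ?D = "diag_block_mat Cs"
  have Dc: "?D \<in> carrier_mat (sum_list (map dim_row Cs)) (length Cs * n)"
  proof -
    have "\<forall>C\<in>set Cs. dim_col C = n" using Cons.prems(1) by simp
    then show ?thesis by (rule diag_block_dims)
  qed
  have Cc: "C \<in> carrier_mat (dim_row C) n" using Cons.prems(1) unfolding carrier_mat_def by simp
  have f0: "f 0 \<in> carrier_vec n" using Cons.prems(2)[of 0] by simp
  have fs: "stk (length Cs) n (\<lambda>i. f (Suc i)) \<in> carrier_vec (length Cs * n)" by simp
  have IH: "?D *\<^sub>v stk (length Cs) n (\<lambda>i. f (Suc i)) = 0\<^sub>v (sum_list (map dim_row Cs))"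
  proof (rule Cons.IH)
    show "\<forall>C\<in>set Cs. dim_col C = n" using Cons.prems(1) by simp
    fix i assume i: "i < length Cs"
    show "f (Suc i) \<in> carrier_vec n" using Cons.prems(2)[of "Suc i"] i by simp
    show "Cs ! i *\<^sub>v f (Suc i) = 0\<^sub>v (dim_row (Cs ! i))" using Cons.prems(3)[of "Suc i"] i by simp
  qed
  have "diag_block_mat (C # Cs) *\<^sub>v stk (length (C # Cs)) n f
     = four_block_mat C (0\<^sub>m (dim_row C) (dim_col ?D)) (0\<^sub>m (dim_row ?D) (dim_col C)) ?D *\<^sub>v
       (f 0 @\<^sub>v stk (length Cs) n (\<lambda>i. f (Suc i)))"
    using stk_Cons[of f n "length Cs", OF f0] by (simp only: diag_block_mat.simps Let_def length_Cons)
  also have "\<dots> = (C *\<^sub>v f 0 + 0\<^sub>m (dim_row C) (dim_col ?D) *\<^sub>v stk (length Cs) n (\<lambda>i. f (Suc i))) @\<^sub>v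
     (0\<^sub>m (dim_row ?D) (dim_col C) *\<^sub>v f 0 + ?D *\<^sub>v stk (length Cs) n (\<lambda>i. f (Suc i)))"
  proof -
    have d1: "dim_col ?D = length Cs * n" "dim_row ?D = sum_list (map dim_row Cs)" using Dc by auto
    have d2: "dim_col C = n" using Cc by auto
    show ?thesis unfolding d1 d2 by (rule four_block_mat_mult_vec[OF Cc _ _ Dc f0 fs]) (rule zero_carrier_mat)+
  qed
  also have "\<dots> = 0\<^sub>v (dim_row C) @\<^sub>v 0\<^sub>v (sum_list (map dim_row Cs))"
  proof -
    have e1: "C *\<^sub>v f 0 = 0\<^sub>v (dim_row C)" using Cons.prems(3)[of 0] by simp
    have e2: "0\<^sub>m (dim_row C) (dim_col ?D) *\<^sub>v stk (length Cs) n (\<lambda>i. f (Suc i)) = 0\<^sub>v (dim_row C)"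
      using Dc fs by (simp add: zero_mult_vec_l)
    have e3: "0\<^sub>m (dim_row ?D) (dim_col C) *\<^sub>v f 0 = 0\<^sub>v (dim_row ?D)"
      using Cc f0 by (simp add: zero_mult_vec_l)
    show ?thesis unfolding e1 e2 e3 IH using Dc by simp
  qed
  also have "\<dots> = 0\<^sub>v (sum_list (map dim_row (C # Cs)))" by (intro eq_vecI) (simp_all)
  finally show ?case .
qed



lemma (in vec_space) fin_dim_subspace:
  assumes X: "subspace class_ring X V"
  shows "vectorspace.fin_dim class_ring (vs X)"
proof -
  interpret X: vectorspace class_ring "vs X" using subspace_is_vs[OF X] .
  have subm: "submodule class_ring X V" using X by (simp add: is_module)
  have XC: "X \<subseteq> carrier_vec n" using subm unfolding submodule_def by simp
  let ?P = "\<lambda>S. S \<subseteq> carrier (vs X) \<and> X.lin_indpt S"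
  have bound: "finite S \<and> card S \<le> n" if "?P S" for S
  proof -
    have SX: "S \<subseteq> X" using that by simp
    have "X.lin_indpt S = lin_indpt S" using span_li_not_depend(2)[OF SX subm] by simp
    hence li: "lin_indpt S" using that by simp
    have SC: "S \<subseteq> carrier_vec n" using SX XC by auto
    show ?thesis using li_le_dim(1)[OF fin_dim SC li] li_le_dim(2)[OF fin_dim SC li] dim_is_n by simp
  qed
  have P0: "?P {}" by (simp add: X.lin_dep_def)
  obtain A where A: "finite A" "maximal A ?P" using maximal_exists[of ?P n "{}", OF bound P0] by blast
  have "X.gen_set A" by (rule X.max_li_is_gen[OF A(2)])
  moreover have "A \<subseteq> carrier (vs X)" using A(2) unfolding maximal_def by simp
  ultimately show ?thesis unfolding X.fin_dim_def using A(1) by blast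
qed

lemma dim_le_rank:
  fixes M :: "real mat"
  assumes M: "M \<in> carrier_mat r n" and W: "subspace class_ring W (module_vec TYPE(real) n)"
    and inj: "\<forall>x\<in>W. M *\<^sub>v x = 0\<^sub>v r \<longrightarrow> x = 0\<^sub>v n"
  shows "subspace_dim n W \<le> vec_space.rank r M"
proof -
  interpret V1: vec_space "TYPE(real)" n .
  interpret V2: vec_space "TYPE(real)" r .
  have subm: "submodule class_ring W V1.V" using W by (simp add: V1.is_module)
  have WC: "W \<subseteq> carrier_vec n" using subm unfolding submodule_def by simp
  have W0: "0\<^sub>v n \<in> W" using submodule.zero_closed[OF subm] by simp
  have Wadd: "x + y \<in> W" if "x \<in> W" "y \<in> W" for x y
    using submodule.m_closed[OF subm that] by simp
  have Wsm: "c \<cdot>\<^sub>v x \<in> W" if "x \<in> W" for c x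
    using submodule.smult_closed[OF subm _ that] by (simp add: class_ring_simps)
  define Im where "Im = (\<lambda>x. M *\<^sub>v x) ` W"
  have Im_sub: "subspace class_ring Im V2.V"
  proof (rule V2.subspace_crit)
    show "Im \<subseteq> carrier_vec r" unfolding Im_def using M WC by auto
    show "0\<^sub>v r \<in> Im" unfolding Im_def using W0 M by (auto intro!: image_eqI[of _ _ "0\<^sub>v n"] eq_vecI simp: scalar_prod_def)
    fix v w assume "v \<in> Im" "w \<in> Im"
    then obtain x y where xy: "x \<in> W" "y \<in> W" "v = M *\<^sub>v x" "w = M *\<^sub>v y" unfolding Im_def by auto
    have "v + w = M *\<^sub>v (x + y)" using xy WC M by (simp add: mult_add_distrib_mat_vec subsetD)
    then show "v + w \<in> Im" unfolding Im_def using Wadd[OF xy(1,2)] by auto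
  next
    fix c v assume "v \<in> Im"
    then obtain x where x: "x \<in> W" "v = M *\<^sub>v x" unfolding Im_def by auto
    have "c \<cdot>\<^sub>v v = M *\<^sub>v (c \<cdot>\<^sub>v x)" using x WC M by (simp add: mult_mat_vec subsetD)
    then show "c \<cdot>\<^sub>v v \<in> Im" unfolding Im_def using Wsm[OF x(1)] by auto
  qed
  interpret VW: vectorspace class_ring "V1.vs W" using V1.subspace_is_vs[OF W] .
  interpret VI: vectorspace class_ring "V2.vs Im" using V2.subspace_is_vs[OF Im_sub] .
  have lm: "linear_map class_ring (V1.vs W) (V2.vs Im) (\<lambda>x. M *\<^sub>v x)"
  proof -
    have "(\<lambda>x. M *\<^sub>v x) \<in> LinearCombinations.module_hom class_ring (V1.vs W) (V2.vs Im)"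
      unfolding LinearCombinations.module_hom_def
    proof (simp, intro conjI allI impI)
      show "(\<lambda>x. M *\<^sub>v x) \<in> W \<rightarrow> Im" unfolding Im_def by auto
    next
      fix m1 m2 assume "m1 \<in> W \<and> m2 \<in> W"
      then show "M *\<^sub>v (m1 + m2) = M *\<^sub>v m1 + M *\<^sub>v m2" using WC M by (simp add: mult_add_distrib_mat_vec subsetD)
    next
      fix c m assume "m \<in> W"
      then show "M *\<^sub>v (c \<cdot>\<^sub>v m) = c \<cdot>\<^sub>v (M *\<^sub>v m)" using WC M by (simp add: mult_mat_vec subsetD)
    qed
    then show ?thesis
      unfolding linear_map_def mod_hom_def mod_hom_axioms_def
      using VW.vectorspace_axioms VI.vectorspace_axioms by (simp add: vectorspace_def)
  qed
  interpret L: linear_map class_ring "V1.vs W" "V2.vs Im" "\<lambda>x. M *\<^sub>v x" by (rule lm)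
  have injT: "inj_on (\<lambda>x. M *\<^sub>v x) (carrier (V1.vs W))"
  proof (rule inj_onI)
    fix x y assume x: "x \<in> carrier (V1.vs W)" and y: "y \<in> carrier (V1.vs W)" and e: "M *\<^sub>v x = M *\<^sub>v y"
    have xc: "x \<in> carrier_vec n" "y \<in> carrier_vec n" using x y WC by auto
    have "x + (-1) \<cdot>\<^sub>v y \<in> W" using x y Wadd Wsm by simp
    moreover have "M *\<^sub>v (x + (-1) \<cdot>\<^sub>v y) = 0\<^sub>v r"
    proof -
      have "M *\<^sub>v (x + (-1) \<cdot>\<^sub>v y) = M *\<^sub>v x + M *\<^sub>v ((-1) \<cdot>\<^sub>v y)"
        by (rule mult_add_distrib_mat_vec[OF M xc(1)]) (use xc in simp)
      also have "M *\<^sub>v ((-1) \<cdot>\<^sub>v y) = (-1) \<cdot>\<^sub>v (M *\<^sub>v y)" by (rule mult_mat_vec[OF M xc(2)])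
      also have "M *\<^sub>v x + (-1) \<cdot>\<^sub>v (M *\<^sub>v y) = 0\<^sub>v r"
        unfolding e by (rule eq_vecI) (use M in simp_all)
      finally show ?thesis .
    qed
    ultimately have d: "x + (-1) \<cdot>\<^sub>v y = 0\<^sub>v n" using inj by auto
    show "x = y"
    proof (rule eq_vecI)
      fix i assume i: "i < dim_vec y"
      have "(x + (-1) \<cdot>\<^sub>v y) $ i = 0" using d i xc by simp
      then show "x $ i = y $ i" using i xc by simp
    qed (use xc in simp)
  qed
  have surjT: "(\<lambda>x. M *\<^sub>v x) ` carrier (V1.vs W) = carrier (V2.vs Im)" unfolding Im_def by simp
  have fdW: "VW.fin_dim" using V1.fin_dim_subspace[OF W] .
  have eqdim: "VW.dim = VI.dim" by (rule L.dim_eq[OF fdW injT surjT])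
  have fdI: "VI.fin_dim" by (rule L.surj_fin_dim[OF fdW surjT])
  have colsC: "set (cols M) \<subseteq> carrier_vec r" using M cols_dim by blast
  have span_sub: "subspace class_ring (V2.span (set (cols M))) V2.V" by (rule V2.span_is_subspace[OF colsC])
  have Im_span: "Im \<subseteq> V2.span (set (cols M))"
    using V2.col_space_eq[OF M] M WC unfolding Im_def V2.col_space_def by auto
  have nest: "subspace class_ring Im (V2.vs (V2.span (set (cols M))))"
    by (rule V2.nested_subspaces[OF span_sub Im_sub Im_span])
  interpret VS: vectorspace class_ring "V2.vs (V2.span (set (cols M)))" using V2.subspace_is_vs[OF span_sub] .
  have "vectorspace.dim class_ring (VS.vs Im) \<le> VS.dim"
    by (rule VS.subspace_dim[OF nest V2.fin_dim_span_cols[OF M]]) (use fdI in simp)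
  then have "VI.dim \<le> VS.dim" by simp
  moreover have "VS.dim = V2.rank M" unfolding V2.rank_def ..
  moreover have "subspace_dim n W = VW.dim" unfolding subspace_dim_def ..
  ultimately show ?thesis using eqdim by simp
qed




lemma obs_foldr:
  fixes H A :: "real mat"
  assumes H: "H \<in> carrier_mat p n" and A: "A \<in> carrier_mat n n"
  shows "foldr (\<lambda>l M. (H * A ^\<^sub>m l) @\<^sub>r M) ls (0\<^sub>m 0 n) \<in> carrier_mat (length ls * p) n \<and>
    (\<forall>v\<in>carrier_vec n. foldr (\<lambda>l M. (H * A ^\<^sub>m l) @\<^sub>r M) ls (0\<^sub>m 0 n) *\<^sub>v v = 0\<^sub>v (length ls * p)
       \<longrightarrow> (\<forall>l\<in>set ls. (H * A ^\<^sub>m l) *\<^sub>v v = 0\<^sub>v p))"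
proof (induction ls)
  case Nil
  show ?case by simp
next
  case (Cons l ls)
  let ?F = "foldr (\<lambda>l M. (H * A ^\<^sub>m l) @\<^sub>r M) ls (0\<^sub>m 0 n)"
  have Fc: "?F \<in> carrier_mat (length ls * p) n" using Cons.IH by blast
  have Hl: "H * A ^\<^sub>m l \<in> carrier_mat p n" using H A by auto
  have car: "(H * A ^\<^sub>m l) @\<^sub>r ?F \<in> carrier_mat (length (l # ls) * p) n"
    using carrier_append_rows[OF Hl Fc] by simp
  moreover have "\<forall>v\<in>carrier_vec n. ((H * A ^\<^sub>m l) @\<^sub>r ?F) *\<^sub>v v = 0\<^sub>v (length (l # ls) * p)
       \<longrightarrow> (\<forall>l'\<in>set (l # ls). (H * A ^\<^sub>m l') *\<^sub>v v = 0\<^sub>v p)"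
  proof (intro ballI impI)
    fix v l' assume v: "v \<in> carrier_vec n" and z: "((H * A ^\<^sub>m l) @\<^sub>r ?F) *\<^sub>v v = 0\<^sub>v (length (l # ls) * p)"
      and l': "l' \<in> set (l # ls)"
    have "((H * A ^\<^sub>m l) @\<^sub>r ?F) *\<^sub>v v = ((H * A ^\<^sub>m l) *\<^sub>v v) @\<^sub>v (?F *\<^sub>v v)"
      by (rule mat_mult_append[OF Hl Fc v])
    moreover have "0\<^sub>v (length (l # ls) * p) = (0\<^sub>v p :: real vec) @\<^sub>v 0\<^sub>v (length ls * p)"
      by (intro eq_vecI) auto
    ultimately have "((H * A ^\<^sub>m l) *\<^sub>v v) @\<^sub>v (?F *\<^sub>v v) = 0\<^sub>v p @\<^sub>v 0\<^sub>v (length ls * p)" using z by simp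
    then have e: "(H * A ^\<^sub>m l) *\<^sub>v v = 0\<^sub>v p" "?F *\<^sub>v v = 0\<^sub>v (length ls * p)"
      using append_vec_eq[of "(H * A ^\<^sub>m l) *\<^sub>v v" p "0\<^sub>v p"] Hl v by auto
    show "(H * A ^\<^sub>m l') *\<^sub>v v = 0\<^sub>v p" using l' e Cons.IH v by auto
  qed
  ultimately show ?case by simp
qed

lemma kernel_family_eq:
  assumes "\<forall>M\<in>Ms. dim_col M = n"
  shows "carrier_vec n \<inter> \<Inter> (mat_kernel ` Ms) = {v \<in> carrier_vec n. \<forall>M\<in>Ms. M *\<^sub>v v = (0\<^sub>v (dim_row M) :: real vec)}"
  using assms unfolding mat_kernel_def by auto

lemma kernel_family_subspace:
  fixes Ms :: "real mat set"
  assumes Ms: "\<forall>M\<in>Ms. dim_col M = n"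
  shows "subspace class_ring (carrier_vec n \<inter> \<Inter> (mat_kernel ` Ms)) (module_vec TYPE(real) n)"
proof -
  interpret vec_space "TYPE(real)" n .
  let ?S = "{v \<in> carrier_vec n. \<forall>M\<in>Ms. M *\<^sub>v v = (0\<^sub>v (dim_row M) :: real vec)}"
  have "subspace class_ring ?S V"
  proof (rule subspace_crit)
    show "?S \<subseteq> carrier_vec n" by blast
    have "\<forall>M\<in>Ms. M *\<^sub>v 0\<^sub>v n = (0\<^sub>v (dim_row M) :: real vec)"
    proof
      fix M assume M: "M \<in> Ms"
      have Mc: "M \<in> carrier_mat (dim_row M) n" using Ms M unfolding carrier_mat_def by blast
      show "M *\<^sub>v 0\<^sub>v n = 0\<^sub>v (dim_row M)" by (rule mult_zero_vec_r[OF Mc])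
    qed
    then show "0\<^sub>v n \<in> ?S" by simp
  next
    fix v w assume v: "v \<in> ?S" and w: "w \<in> ?S"
    have "\<forall>M\<in>Ms. M *\<^sub>v (v + w) = (0\<^sub>v (dim_row M) :: real vec)"
    proof
      fix M assume M: "M \<in> Ms"
      have Mc: "M \<in> carrier_mat (dim_row M) n" using Ms M unfolding carrier_mat_def by blast
      have vc: "v \<in> carrier_vec n" "w \<in> carrier_vec n" using v w by auto
      have "M *\<^sub>v (v + w) = M *\<^sub>v v + M *\<^sub>v w" by (rule mult_add_distrib_mat_vec[OF Mc vc])
      also have "\<dots> = 0\<^sub>v (dim_row M) + 0\<^sub>v (dim_row M)" using v w M by simp
      also have "\<dots> = 0\<^sub>v (dim_row M)" by simp
      finally show "M *\<^sub>v (v + w) = 0\<^sub>v (dim_row M)" .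
    qed
    then show "v + w \<in> ?S" using v w by simp
  next
    fix c v assume v: "v \<in> ?S"
    have "\<forall>M\<in>Ms. M *\<^sub>v (c \<cdot>\<^sub>v v) = (0\<^sub>v (dim_row M) :: real vec)"
    proof
      fix M assume M: "M \<in> Ms"
      have Mc: "M \<in> carrier_mat (dim_row M) n" using Ms M unfolding carrier_mat_def by blast
      have vc: "v \<in> carrier_vec n" using v by auto
      have "M *\<^sub>v (c \<cdot>\<^sub>v v) = c \<cdot>\<^sub>v (M *\<^sub>v v)" by (rule mult_mat_vec[OF Mc vc])
      also have "\<dots> = c \<cdot>\<^sub>v 0\<^sub>v (dim_row M)" using v M by simp
      also have "\<dots> = 0\<^sub>v (dim_row M)" by (intro eq_vecI) simp_all
      finally show "M *\<^sub>v (c \<cdot>\<^sub>v v) = 0\<^sub>v (dim_row M)" .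
    qed
    then show "c \<cdot>\<^sub>v v \<in> ?S" using v by simp
  qed
  then show ?thesis using kernel_family_eq[OF Ms] by simp
qed




lemma stk_in_undet:
  fixes N n p :: nat and m :: "nat \<Rightarrow> nat" and E :: "nat \<Rightarrow> nat \<Rightarrow> bool"
    and A H :: "real mat" and C :: "nat \<Rightarrow> real mat" and f :: "nat \<Rightarrow> real vec"
  assumes N: "N \<ge> 1"
    and A: "A \<in> carrier_mat n n"
    and C: "\<forall>i<N. C i \<in> carrier_mat (m i) n"
    and H: "H \<in> carrier_mat p n"
    and f: "\<And>j. j < N \<Longrightarrow> f j \<in> carrier_vec n"
    and ha: "\<And>k j. j < N \<Longrightarrow> C j *\<^sub>v (A ^\<^sub>m k *\<^sub>v f j) = 0\<^sub>v (m j)"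
    and hb: "(\<forall>k j. j < N \<longrightarrow> H *\<^sub>v (A ^\<^sub>m k *\<^sub>v f j) = 0\<^sub>v p) \<or> (\<exists>y. \<forall>j<N. f j = y)"
    and hc: "\<And>j. j < N \<Longrightarrow> poly_mat (min_poly_plus A) A *\<^sub>v f j = 0\<^sub>v n"
  shows "stk N n f \<in> undetectable_subspace
               (diag_block_mat (map C [0..<N]) @\<^sub>r kron (laplacian N E) H)
               (kron (1\<^sub>m N) A)"
proof -
  let ?Ab = "kron (1\<^sub>m N) A"
  let ?Cs = "map C [0..<N]"
  let ?D = "diag_block_mat ?Cs"
  let ?L = "kron (laplacian N E) H"
  let ?R = "sum_list (map dim_row ?Cs)"
  have Abc: "?Ab \<in> carrier_mat (N*n) (N*n)" using kron_carrier[OF one_carrier_mat A] .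
  have colsC: "\<forall>X\<in>set ?Cs. dim_col X = n" using C by auto
  have Dc: "?D \<in> carrier_mat ?R (N*n)" using diag_block_dims[OF colsC] by simp
  have Lc: "?L \<in> carrier_mat (N*p) (N*n)" using kron_carrier[OF laplacian_carrier H] .
  have Gc: "?D @\<^sub>r ?L \<in> carrier_mat (?R + N*p) (N*n)" using carrier_append_rows[OF Dc Lc] .
  have fk: "\<And>k j. j < N \<Longrightarrow> A ^\<^sub>m k *\<^sub>v f j \<in> carrier_vec n"
  proof -
    fix k j assume "j < N"
    then show "A ^\<^sub>m k *\<^sub>v f j \<in> carrier_vec n" using mult_mat_vec_carrier[OF pow_carrier_mat[OF A] f] by blast
  qed
  have ker: "stk N n f \<in> mat_kernel ((?D @\<^sub>r ?L) * ?Ab ^\<^sub>m k)" for k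
  proof -
    have pc: "?Ab ^\<^sub>m k \<in> carrier_mat (N*n) (N*n)" using Abc by auto
    have "((?D @\<^sub>r ?L) * ?Ab ^\<^sub>m k) *\<^sub>v stk N n f = (?D @\<^sub>r ?L) *\<^sub>v (?Ab ^\<^sub>m k *\<^sub>v stk N n f)"
      by (rule assoc_mult_mat_vec[OF Gc pc stk_carrier])
    also have "?Ab ^\<^sub>m k *\<^sub>v stk N n f = stk N n (\<lambda>i. A ^\<^sub>m k *\<^sub>v f i)"
      by (rule kron_pow_stk[OF A f])
    also have "(?D @\<^sub>r ?L) *\<^sub>v stk N n (\<lambda>i. A ^\<^sub>m k *\<^sub>v f i)
        = (?D *\<^sub>v stk N n (\<lambda>i. A ^\<^sub>m k *\<^sub>v f i)) @\<^sub>v (?L *\<^sub>v stk N n (\<lambda>i. A ^\<^sub>m k *\<^sub>v f i))"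
      by (rule mat_mult_append[OF Dc Lc stk_carrier])
    also have "?D *\<^sub>v stk N n (\<lambda>i. A ^\<^sub>m k *\<^sub>v f i) = 0\<^sub>v ?R"
    proof -
      have dr: "\<And>i. i < N \<Longrightarrow> dim_row (C i) = m i" using C by auto
      show ?thesis using diag_block_stk_zero[OF colsC, of "\<lambda>i. A ^\<^sub>m k *\<^sub>v f i"] fk ha dr by simp
    qed
    also have "?L *\<^sub>v stk N n (\<lambda>i. A ^\<^sub>m k *\<^sub>v f i) = 0\<^sub>v (N*p)"
    proof (rule kron_lap_zero[OF H fk])
      show "(\<forall>j<N. H *\<^sub>v (A ^\<^sub>m k *\<^sub>v f j) = 0\<^sub>v p) \<or> (\<exists>y. \<forall>j<N. A ^\<^sub>m k *\<^sub>v f j = y)"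
        using hb by auto
    qed
    also have "(0\<^sub>v ?R :: real vec) @\<^sub>v 0\<^sub>v (N*p) = 0\<^sub>v (?R + N*p)" by (intro eq_vecI) auto
    finally have "((?D @\<^sub>r ?L) * ?Ab ^\<^sub>m k) *\<^sub>v stk N n f = 0\<^sub>v (?R + N*p)" .
    moreover have "(?D @\<^sub>r ?L) * ?Ab ^\<^sub>m k \<in> carrier_mat (?R + N*p) (N*n)" using Gc pc by auto
    ultimately show ?thesis by (intro mat_kernelI) auto
  qed
  have pol: "stk N n f \<in> mat_kernel (poly_mat (min_poly_plus ?Ab) ?Ab)"
  proof -
    have "poly_mat (min_poly_plus ?Ab) ?Ab = pf (coeffs (min_poly_plus A)) ?Ab"
      unfolding min_poly_plus_kron[OF N A] poly_mat_pf ..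
    moreover have "pf (coeffs (min_poly_plus A)) ?Ab *\<^sub>v stk N n f = stk N n (\<lambda>i. pf (coeffs (min_poly_plus A)) A *\<^sub>v f i)"
      by (rule pf_stk[OF A f])
    moreover have "stk N n (\<lambda>i. pf (coeffs (min_poly_plus A)) A *\<^sub>v f i) = stk N n (\<lambda>i. 0\<^sub>v n)"
      using hc by (intro stk_cong) (simp add: poly_mat_pf)
    moreover have "stk N n (\<lambda>i. 0\<^sub>v n) = 0\<^sub>v (N*n)"
      by (intro eq_vecI) (auto simp: stk_index, cases n, auto)
    moreover have "pf (coeffs (min_poly_plus A)) ?Ab \<in> carrier_mat (N*n) (N*n)" by (rule pf_carrier[OF Abc])
    ultimately show ?thesis by (intro mat_kernelI) auto
  qed
  show ?thesis unfolding undetectable_subspace_def using ker pol Abc by auto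
qed




lemma zero_in_kernel: "0\<^sub>v (dim_col M) \<in> mat_kernel (M :: real mat)"
  unfolding mat_kernel_def by (auto intro!: eq_vecI simp: scalar_prod_def)

lemma undet_props:
  fixes A B :: "real mat"
  assumes A: "A \<in> carrier_mat n n" and B: "B \<in> carrier_mat q n"
    and x: "x \<in> undetectable_subspace B A"
  shows "x \<in> carrier_vec n" "\<And>k. B *\<^sub>v (A ^\<^sub>m k *\<^sub>v x) = 0\<^sub>v q"
    "poly_mat (min_poly_plus A) A *\<^sub>v x = 0\<^sub>v n"
proof -
  have dA: "dim_row A = n" using A by simp
  show xc: "x \<in> carrier_vec n" using x dA unfolding undetectable_subspace_def by auto
  have "\<forall>k<n. B *\<^sub>v (A ^\<^sub>m k *\<^sub>v x) = 0\<^sub>v q"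
  proof (intro allI impI)
    fix k assume k: "k < n"
    have "Suc k \<in> {1..n}" using k by simp
    then have "x \<in> mat_kernel (B * A ^\<^sub>m k)" using x dA unfolding undetectable_subspace_def by fastforce
    moreover have BA: "B * A ^\<^sub>m k \<in> carrier_mat q n" using A B by auto
    ultimately have "(B * A ^\<^sub>m k) *\<^sub>v x = 0\<^sub>v q" using mat_kernelD(2) by blast
    then show "B *\<^sub>v (A ^\<^sub>m k *\<^sub>v x) = 0\<^sub>v q" using assoc_mult_mat_vec[OF B pow_carrier_mat[OF A] xc] by simp
  qed
  then show "\<And>k. B *\<^sub>v (A ^\<^sub>m k *\<^sub>v x) = 0\<^sub>v q" using stab[OF A B xc] by blast
  have Pc: "poly_mat (min_poly_plus A) A \<in> carrier_mat n n" unfolding poly_mat_pf by (rule pf_carrier[OF A])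
  have "x \<in> mat_kernel (poly_mat (min_poly_plus A) A)" using x unfolding undetectable_subspace_def by auto
  then show "poly_mat (min_poly_plus A) A *\<^sub>v x = 0\<^sub>v n" using mat_kernelD(2)[OF Pc] by blast
qed

lemma unobs_props:
  fixes A H :: "real mat"
  assumes A: "A \<in> carrier_mat n n" and H: "H \<in> carrier_mat p n"
    and x: "x \<in> unobservable_subspace H A"
  shows "x \<in> carrier_vec n" "\<And>k. H *\<^sub>v (A ^\<^sub>m k *\<^sub>v x) = 0\<^sub>v p"
proof -
  have dA: "dim_row A = n" using A by simp
  show xc: "x \<in> carrier_vec n" using x dA unfolding unobservable_subspace_def by auto
  have "\<forall>k<n. H *\<^sub>v (A ^\<^sub>m k *\<^sub>v x) = 0\<^sub>v p"
  proof (intro allI impI)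
    fix k assume k: "k < n"
    have "Suc k \<in> {1..n}" using k by simp
    then have "x \<in> mat_kernel (H * A ^\<^sub>m k)" using x dA unfolding unobservable_subspace_def by fastforce
    moreover have BA: "H * A ^\<^sub>m k \<in> carrier_mat p n" using A H by auto
    ultimately have "(H * A ^\<^sub>m k) *\<^sub>v x = 0\<^sub>v p" using mat_kernelD(2) by blast
    then show "H *\<^sub>v (A ^\<^sub>m k *\<^sub>v x) = 0\<^sub>v p" using assoc_mult_mat_vec[OF H pow_carrier_mat[OF A] xc] by simp
  qed
  then show "\<And>k. H *\<^sub>v (A ^\<^sub>m k *\<^sub>v x) = 0\<^sub>v p" using stab[OF A H xc] by blast
qed

lemma obs_props:
  fixes A H :: "real mat"
  assumes A: "A \<in> carrier_mat n n" and H: "H \<in> carrier_mat p n"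
  shows "obs_matrix H A \<in> carrier_mat (n * p) n"
    "\<And>x. x \<in> carrier_vec n \<Longrightarrow> obs_matrix H A *\<^sub>v x = 0\<^sub>v (n*p) \<Longrightarrow> x \<in> unobservable_subspace H A"
proof -
  have e: "obs_matrix H A = foldr (\<lambda>l M. (H * A ^\<^sub>m l) @\<^sub>r M) [0..<n] (0\<^sub>m 0 n)"
    unfolding obs_matrix_def using A H by simp
  note ob = obs_foldr[OF H A, of "[0..<n]"]
  show "obs_matrix H A \<in> carrier_mat (n * p) n" using ob e by simp
  fix x assume xc: "x \<in> carrier_vec n" and z: "obs_matrix H A *\<^sub>v x = 0\<^sub>v (n*p)"
  have all: "\<forall>l<n. (H * A ^\<^sub>m l) *\<^sub>v x = 0\<^sub>v p" using ob e xc z by auto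
  have "x \<in> mat_kernel (H * A ^\<^sub>m (l - 1))" if "l \<in> {1..n}" for l
  proof (rule mat_kernelI)
    show "H * A ^\<^sub>m (l - 1) \<in> carrier_mat p n" using H A by auto
    show "(H * A ^\<^sub>m (l - 1)) *\<^sub>v x = 0\<^sub>v p" using all that by auto
  qed (rule xc)
  then show "x \<in> unobservable_subspace H A" unfolding unobservable_subspace_def using xc A by auto
qed




theorem theorem1:
  fixes N n p :: nat and m :: "nat \<Rightarrow> nat" and E :: "nat \<Rightarrow> nat \<Rightarrow> bool"
    and A H :: "real mat" and C :: "nat \<Rightarrow> real mat"
  assumes N: "N \<ge> 1"
    and no_loops: "\<forall>i<N. \<not> E i i"
    and A: "A \<in> carrier_mat n n"
    and C: "\<forall>i<N. C i \<in> carrier_mat (m i) n"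
    and H: "H \<in> carrier_mat p n"
    and det: "detectable
               (diag_block_mat (map C [0..<N]) @\<^sub>r kron (laplacian N E) H)
               (kron (1\<^sub>m N) A)"
  shows "(\<Inter>i\<in>{..<N}. undetectable_subspace (C i) A) = {0\<^sub>v n} \<and>
         (\<forall>i<N. unobservable_subspace H A \<inter> undetectable_subspace (C i) A = {0\<^sub>v n}) \<and>
         mat_rank (obs_matrix H A) \<ge> Max ((\<lambda>i. subspace_dim n (undetectable_subspace (C i) A)) ` {..<N})"
proof -
  let ?P = "poly_mat (min_poly_plus A) A"
  have Pc: "?P \<in> carrier_mat n n" unfolding poly_mat_pf by (rule pf_carrier[OF A])
  have Abc: "kron (1\<^sub>m N) A \<in> carrier_mat (N*n) (N*n)" using kron_carrier[OF one_carrier_mat A] .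
  have zero: "stk N n f = 0\<^sub>v (N*n)"
    if f: "\<And>j. j < N \<Longrightarrow> f j \<in> carrier_vec n"
    and ha: "\<And>k j. j < N \<Longrightarrow> C j *\<^sub>v (A ^\<^sub>m k *\<^sub>v f j) = 0\<^sub>v (m j)"
    and hb: "(\<forall>k j. j < N \<longrightarrow> H *\<^sub>v (A ^\<^sub>m k *\<^sub>v f j) = 0\<^sub>v p) \<or> (\<exists>y. \<forall>j<N. f j = y)"
    and hc: "\<And>j. j < N \<Longrightarrow> ?P *\<^sub>v f j = 0\<^sub>v n" for f
  proof -
    have "stk N n f \<in> undetectable_subspace
               (diag_block_mat (map C [0..<N]) @\<^sub>r kron (laplacian N E) H) (kron (1\<^sub>m N) A)"
      by (rule stk_in_undet[OF N A C H f ha hb hc])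
    then show ?thesis using det Abc unfolding detectable_def by simp
  qed
  have zero_undet: "0\<^sub>v n \<in> undetectable_subspace (C i) A" if i: "i < N" for i
  proof -
    have Ci: "C i \<in> carrier_mat (m i) n" using C i by auto
    have "0\<^sub>v n \<in> mat_kernel (C i * A ^\<^sub>m (l - 1))" for l
    proof -
      have "C i * A ^\<^sub>m (l - 1) \<in> carrier_mat (m i) n" using Ci A by auto
      then have dc: "dim_col (C i * A ^\<^sub>m (l - 1)) = n" by (rule carrier_matD(2))
      show ?thesis using zero_in_kernel[of "C i * A ^\<^sub>m (l - 1)", unfolded dc] .
    qed
    moreover have "0\<^sub>v n \<in> mat_kernel ?P" using zero_in_kernel[of ?P] Pc by simp
    ultimately show ?thesis unfolding undetectable_subspace_def using A by auto
  qed
  have zero_unobs: "0\<^sub>v n \<in> unobservable_subspace H A"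
  proof -
    have "0\<^sub>v n \<in> mat_kernel (H * A ^\<^sub>m (l - 1))" for l
    proof -
      have "H * A ^\<^sub>m (l - 1) \<in> carrier_mat p n" using H A by auto
      then have dc: "dim_col (H * A ^\<^sub>m (l - 1)) = n" by (rule carrier_matD(2))
      show ?thesis using zero_in_kernel[of "H * A ^\<^sub>m (l - 1)", unfolded dc] .
    qed
    then show ?thesis unfolding unobservable_subspace_def using A by auto
  qed
  \<comment> \<open>Part (i)\<close>
  have part1: "(\<Inter>i\<in>{..<N}. undetectable_subspace (C i) A) = {0\<^sub>v n}"
  proof (intro equalityI subsetI)
    fix x assume x: "x \<in> (\<Inter>i\<in>{..<N}. undetectable_subspace (C i) A)"
    have xi: "\<And>i. i < N \<Longrightarrow> x \<in> undetectable_subspace (C i) A" using x by auto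
    have x0: "x \<in> undetectable_subspace (C 0) A" using xi N by simp
    have C0: "C 0 \<in> carrier_mat (m 0) n" using C N by auto
    have xc: "x \<in> carrier_vec n" using undet_props(1)[OF A C0 x0] .
    have st: "stk N n (\<lambda>j. x) = 0\<^sub>v (N*n)"
    proof (rule zero)
      show "\<And>j. j < N \<Longrightarrow> x \<in> carrier_vec n" using xc by simp
      show "\<And>k j. j < N \<Longrightarrow> C j *\<^sub>v (A ^\<^sub>m k *\<^sub>v x) = 0\<^sub>v (m j)"
        using undet_props(2)[OF A _ xi] C by blast
      show "(\<forall>k j. j < N \<longrightarrow> H *\<^sub>v (A ^\<^sub>m k *\<^sub>v x) = 0\<^sub>v p) \<or> (\<exists>y. \<forall>j<N. x = y)" by blast
      show "\<And>j. j < N \<Longrightarrow> ?P *\<^sub>v x = 0\<^sub>v n" using undet_props(3)[OF A C0 x0] by simp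
    qed
    have "x = 0\<^sub>v n"
    proof (rule eq_vecI)
      fix r assume "r < dim_vec (0\<^sub>v n :: real vec)"
      hence r: "r < n" by simp
      have rN: "r < N*n" using r N by (metis less_le_trans mult_1 mult_le_mono1)
      have "stk N n (\<lambda>j. x) $ r = 0" using st rN by simp
      then show "x $ r = 0\<^sub>v n $ r" using r rN by (simp add: stk_index)
    qed (use xc in simp)
    then show "x \<in> {0\<^sub>v n}" by simp
  next
    fix x :: "real vec" assume "x \<in> {0\<^sub>v n}"
    then show "x \<in> (\<Inter>i\<in>{..<N}. undetectable_subspace (C i) A)" using zero_undet by auto
  qed
  \<comment> \<open>Part (ii)\<close>
  have part2: "unobservable_subspace H A \<inter> undetectable_subspace (C i) A = {0\<^sub>v n}" if i: "i < N" for i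
  proof (intro equalityI subsetI)
    fix x assume x: "x \<in> unobservable_subspace H A \<inter> undetectable_subspace (C i) A"
    have Ci: "C i \<in> carrier_mat (m i) n" using C i by auto
    have xu: "x \<in> undetectable_subspace (C i) A" and xo: "x \<in> unobservable_subspace H A" using x by auto
    have xc: "x \<in> carrier_vec n" using undet_props(1)[OF A Ci xu] .
    let ?f = "\<lambda>j. if j = i then x else 0\<^sub>v n"
    have st: "stk N n ?f = 0\<^sub>v (N*n)"
    proof (rule zero)
      show "\<And>j. j < N \<Longrightarrow> ?f j \<in> carrier_vec n" using xc by simp
      show "\<And>k j. j < N \<Longrightarrow> C j *\<^sub>v (A ^\<^sub>m k *\<^sub>v ?f j) = 0\<^sub>v (m j)"
      proof -
        fix k j assume j: "j < N"
        have Cj: "C j \<in> carrier_mat (m j) n" using C j by auto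
        show "C j *\<^sub>v (A ^\<^sub>m k *\<^sub>v ?f j) = 0\<^sub>v (m j)"
        proof (cases "j = i")
          case True then show ?thesis using undet_props(2)[OF A Ci xu] by simp
        next
          case False
          have "A ^\<^sub>m k *\<^sub>v 0\<^sub>v n = 0\<^sub>v n" by (rule mult_zero_vec_r[OF pow_carrier_mat[OF A]])
          then show ?thesis using False mult_zero_vec_r[OF Cj] by simp
        qed
      qed
      have "\<forall>k j. j < N \<longrightarrow> H *\<^sub>v (A ^\<^sub>m k *\<^sub>v ?f j) = 0\<^sub>v p"
      proof (intro allI impI)
        fix k j assume j: "j < N"
        show "H *\<^sub>v (A ^\<^sub>m k *\<^sub>v ?f j) = 0\<^sub>v p"
        proof (cases "j = i")
          case True then show ?thesis using unobs_props(2)[OF A H xo] by simp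
        next
          case False
          have "A ^\<^sub>m k *\<^sub>v 0\<^sub>v n = 0\<^sub>v n" by (rule mult_zero_vec_r[OF pow_carrier_mat[OF A]])
          then show ?thesis using False mult_zero_vec_r[OF H] by simp
        qed
      qed
      then show "(\<forall>k j. j < N \<longrightarrow> H *\<^sub>v (A ^\<^sub>m k *\<^sub>v ?f j) = 0\<^sub>v p) \<or> (\<exists>y. \<forall>j<N. ?f j = y)" by blast
      show "\<And>j. j < N \<Longrightarrow> ?P *\<^sub>v ?f j = 0\<^sub>v n"
        using undet_props(3)[OF A Ci xu] mult_zero_vec_r[OF Pc] by simp
    qed
    have "x = 0\<^sub>v n"
    proof (rule eq_vecI)
      fix r assume "r < dim_vec (0\<^sub>v n :: real vec)"
      hence r: "r < n" by simp
      have rN: "i*n + r < N*n"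
      proof -
        have "i*n + r < i*n + n" using r by simp
        also have "\<dots> = Suc i * n" by simp
        also have "\<dots> \<le> N*n" using i by (intro mult_le_mono1) simp
        finally show ?thesis .
      qed
      have "stk N n ?f $ (i*n + r) = 0" using st rN by simp
      moreover have "(i*n + r) div n = i" "(i*n + r) mod n = r" using r by auto
      ultimately show "x $ r = 0\<^sub>v n $ r" using r rN by (simp add: stk_index)
    qed (use xc in simp)
    then show "x \<in> {0\<^sub>v n}" by simp
  next
    fix x :: "real vec" assume "x \<in> {0\<^sub>v n}"
    then show "x \<in> unobservable_subspace H A \<inter> undetectable_subspace (C i) A"
      using zero_undet[OF i] zero_unobs by auto
  qed
  \<comment> \<open>Part (iii)\<close>
  have part3: "subspace_dim n (undetectable_subspace (C i) A) \<le> mat_rank (obs_matrix H A)" if i: "i < N" for i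
  proof -
    have Ci: "C i \<in> carrier_mat (m i) n" using C i by auto
    have Oc: "obs_matrix H A \<in> carrier_mat (n * p) n" by (rule obs_props(1)[OF A H])
    let ?Ms = "(\<lambda>l. C i * A ^\<^sub>m (l - 1)) ` {1..n} \<union> {?P}"
    have Ms: "\<forall>M\<in>?Ms. dim_col M = n" using Ci A Pc by auto
    have eqW: "undetectable_subspace (C i) A = carrier_vec n \<inter> \<Inter> (mat_kernel ` ?Ms)"
      unfolding undetectable_subspace_def using A by auto
    have W: "subspace class_ring (undetectable_subspace (C i) A) (module_vec TYPE(real) n)"
      unfolding eqW by (rule kernel_family_subspace[OF Ms])
    have inj: "\<forall>x\<in>undetectable_subspace (C i) A. obs_matrix H A *\<^sub>v x = 0\<^sub>v (n*p) \<longrightarrow> x = 0\<^sub>v n"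
    proof (intro ballI impI)
      fix x assume x: "x \<in> undetectable_subspace (C i) A" and z: "obs_matrix H A *\<^sub>v x = 0\<^sub>v (n*p)"
      have xc: "x \<in> carrier_vec n" using undet_props(1)[OF A Ci x] .
      have "x \<in> unobservable_subspace H A" by (rule obs_props(2)[OF A H xc z])
      then show "x = 0\<^sub>v n" using part2[OF i] x by auto
    qed
    have "subspace_dim n (undetectable_subspace (C i) A) \<le> vec_space.rank (n*p) (obs_matrix H A)"
      by (rule dim_le_rank[OF Oc W inj])
    then show ?thesis unfolding mat_rank_def using Oc by simp
  qed
  have "Max ((\<lambda>i. subspace_dim n (undetectable_subspace (C i) A)) ` {..<N}) \<le> mat_rank (obs_matrix H A)"
  proof (subst Max_le_iff)
    show "finite ((\<lambda>i. subspace_dim n (undetectable_subspace (C i) A)) ` {..<N})" by simp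
    have "0 \<in> {..<N}" using N by simp
    then show "(\<lambda>i. subspace_dim n (undetectable_subspace (C i) A)) ` {..<N} \<noteq> {}" by blast
    show "\<forall>a\<in>(\<lambda>i. subspace_dim n (undetectable_subspace (C i) A)) ` {..<N}. a \<le> mat_rank (obs_matrix H A)"
      using part3 by auto
  qed
  then show ?thesis using part1 part2 by blast
qed


end
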